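(* Let $b>0$ and $\beta>0$. Let $X$ be the set of all $\gamma\in C([0,b])$ which are continuously differentiable on $(0,b]$, with $\gamma(t)>0$ for all $t\in(0,b]$, $\gamma(0)=0$, $\gamma(b)=\beta$, and such that the improper integral $$\mathcal{L}(\gamma)=\int_0^b\left(\frac{1+\gamma'(t)^2}{\gamma(t)}\right)^{1/2}dt$$ is defined (finite). Let $\gamma$ be a minimum of $\mathcal{L}$ on $X$. Then: (a) $\lim_{t\to 0^+}\gamma'(t)=\infty$; (b) $\gamma$ is not constant on any interval; (c) $\gamma$ has at most one critical point, which is a maximum; (d) $\gamma$ is either strictly increasing, or is strictly increasing, reaches a maximum and then is strictly decreasing; (e) $\gamma'$ is strictly decreasing on $(0,b)$. *)

theory Defs
  imports "HOL-Analysis.Analysis"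
begin

definition dcurve :: "real \<Rightarrow> (real \<Rightarrow> real) \<Rightarrow> real \<Rightarrow> real" where
  "dcurve b \<gamma> t = vector_derivative \<gamma> (at t within {0..b})"

definition Lintegrand :: "real \<Rightarrow> (real \<Rightarrow> real) \<Rightarrow> real \<Rightarrow> real" where
  "Lintegrand b \<gamma> t = sqrt ((1 + (dcurve b \<gamma> t)\<^sup>2) / \<gamma> t)"

definition improper_integral_exists :: "real \<Rightarrow> (real \<Rightarrow> real) \<Rightarrow> bool" where
  "improper_integral_exists b f \<longleftrightarrow>
     (\<forall>s\<in>{0<..b}. f integrable_on {s..b}) \<and>
     (\<exists>I. ((\<lambda>s. integral {s..b} f) \<longlongrightarrow> I) (at_right 0))"

definition Lfun :: "real \<Rightarrow> (real \<Rightarrow> real) \<Rightarrow> real" where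
  "Lfun b \<gamma> = Lim (at_right 0) (\<lambda>s. integral {s..b} (Lintegrand b \<gamma>))"

definition admissible :: "real \<Rightarrow> real \<Rightarrow> (real \<Rightarrow> real) \<Rightarrow> bool" where
  "admissible b \<beta> \<gamma> \<longleftrightarrow>
     continuous_on {0..b} \<gamma> \<and>
     (\<forall>t\<in>{0<..b}. \<gamma> differentiable (at t within {0..b})) \<and>
     continuous_on {0<..b} (dcurve b \<gamma>) \<and>
     (\<forall>t\<in>{0<..b}. \<gamma> t > 0) \<and> \<gamma> 0 = 0 \<and> \<gamma> b = \<beta> \<and>
     improper_integral_exists b (Lintegrand b \<gamma>)"

end

theory Submission
  imports Defs
begin

lemma Lint_cont:
  fixes y q :: "real \<Rightarrow> real"
  assumes "continuous_on S y" "continuous_on S q" "\<forall>t\<in>S. y t > 0"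
  shows "continuous_on S (\<lambda>t. sqrt ((1 + (q t)\<^sup>2) / y t))"
  using assms by (intro continuous_intros) auto

lemma Lfun_shift:
  fixes b :: real and \<gamma> \<eta> :: "real \<Rightarrow> real"
  assumes ie: "improper_integral_exists b (Lintegrand b \<gamma>)"
    and cg: "continuous_on {0<..b} (Lintegrand b \<gamma>)"
    and ce: "continuous_on {0<..b} (Lintegrand b \<eta>)"
    and cd: "0 < c" "c \<le> d" "d \<le> b"
    and eq: "\<forall>t\<in>{0<..b}. t \<le> c \<or> d \<le> t \<longrightarrow> Lintegrand b \<eta> t = Lintegrand b \<gamma> t"
  shows "improper_integral_exists b (Lintegrand b \<eta>) \<and>
    Lfun b \<eta> = Lfun b \<gamma> + (integral {c..d} (Lintegrand b \<eta>) - integral {c..d} (Lintegrand b \<gamma>))"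
proof -
  let ?g = "Lintegrand b \<gamma>" and ?e = "Lintegrand b \<eta>"
  let ?D = "integral {c..d} ?e - integral {c..d} ?g"
  have intg: "?g integrable_on {s..b}" "?e integrable_on {s..b}" if "s \<in> {0<..b}" for s
    using that by (auto intro!: integrable_continuous_real continuous_on_subset[OF cg] continuous_on_subset[OF ce])
  obtain I where I: "((\<lambda>s. integral {s..b} ?g) \<longlongrightarrow> I) (at_right 0)"
    using ie unfolding improper_integral_exists_def by blast
  have key: "integral {s..b} ?e = integral {s..b} ?g + ?D" if s: "0 < s" "s \<le> c" for s
  proof -
    have split: "integral {s..b} f = integral {s..c} f + integral {c..d} f + integral {d..b} f"
      if "f integrable_on {s..b}" for f :: "real \<Rightarrow> real"
    proof -
      have "f integrable_on {c..b}" by (rule integrable_subinterval_real[OF that]) (use s cd in auto)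
      then have "integral {c..d} f + integral {d..b} f = integral {c..b} f"
        by (intro Henstock_Kurzweil_Integration.integral_combine) (use cd in auto)
      moreover have "integral {s..c} f + integral {c..b} f = integral {s..b} f"
        by (rule Henstock_Kurzweil_Integration.integral_combine[OF s(2) _ that]) (use cd in auto)
      ultimately show ?thesis by simp
    qed
    have e1: "integral {s..c} ?e = integral {s..c} ?g"
      by (rule integral_cong) (use eq s cd in force)
    have e2: "integral {d..b} ?e = integral {d..b} ?g"
      by (rule integral_cong) (use eq s cd in force)
    show ?thesis
      using split[OF intg(1)] split[OF intg(2)] e1 e2 s cd by auto
  qed
  have ev: "eventually (\<lambda>s. integral {s..b} ?g + ?D = integral {s..b} ?e) (at_right 0)"
    using eventually_at_right_real[OF cd(1)] by eventually_elim (use key in auto)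
  have lim: "((\<lambda>s. integral {s..b} ?e) \<longlongrightarrow> I + ?D) (at_right 0)"
    by (rule Lim_transform_eventually[OF tendsto_add[OF I tendsto_const] ev])
  have "improper_integral_exists b ?e"
    unfolding improper_integral_exists_def using intg lim by blast
  moreover have "Lfun b \<gamma> = I" unfolding Lfun_def by (rule tendsto_Lim[OF _ I]) simp
  moreover have "Lfun b \<eta> = I + ?D" unfolding Lfun_def by (rule tendsto_Lim[OF _ lim]) simp
  ultimately show ?thesis by simp
qed

definition AA :: "real \<Rightarrow> (real \<Rightarrow> real) \<Rightarrow> real \<Rightarrow> real" where
  "AA b \<gamma> t = - (1 + (dcurve b \<gamma> t)\<^sup>2) / (2 * (\<gamma> t)\<^sup>2 * sqrt ((1 + (dcurve b \<gamma> t)\<^sup>2) / \<gamma> t))"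
definition BB :: "real \<Rightarrow> (real \<Rightarrow> real) \<Rightarrow> real \<Rightarrow> real" where
  "BB b \<gamma> t = dcurve b \<gamma> t / (\<gamma> t * sqrt ((1 + (dcurve b \<gamma> t)\<^sup>2) / \<gamma> t))"

lemma sqrt_deriv_step:
  fixes Y Q a a' :: real
  assumes "Y + e * a > 0"
  shows "((\<lambda>e. sqrt ((1 + (Q + e * a')\<^sup>2) / (Y + e * a))) has_field_derivative
     (inverse (sqrt ((1 + (Q + e * a')\<^sup>2) / (Y + e * a))) / 2) *
     (((2 * (Q + e*a') * a') * (Y + e * a) - (1 + (Q + e * a')\<^sup>2) * a) / ((Y + e * a) * (Y + e * a))))
     (at e within U)"
proof -
  have pos: "(1 + (Q + e * a')\<^sup>2) / (Y + e * a) > 0" using assms by (simp add: add_pos_nonneg)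
  have d1: "((\<lambda>e. Q + e * a') has_field_derivative a') (at e within U)"
    by (auto intro!: derivative_eq_intros)
  have d2: "((\<lambda>e. 1 + (Q + e * a')\<^sup>2) has_field_derivative (2 * (Q + e*a') * a')) (at e within U)"
    by (auto intro!: derivative_eq_intros)
  have d3: "((\<lambda>e. Y + e * a) has_field_derivative a) (at e within U)"
    by (auto intro!: derivative_eq_intros)
  have d4: "((\<lambda>e. (1 + (Q + e * a')\<^sup>2) / (Y + e * a)) has_field_derivative
      (((2 * (Q + e*a') * a') * (Y + e * a) - (1 + (Q + e * a')\<^sup>2) * a) / ((Y + e * a) * (Y + e * a)))) (at e within U)"
    using DERIV_divide[OF d2 d3] assms by simp
  show ?thesis
    by (rule DERIV_chain2[OF DERIV_real_sqrt[OF pos] d4])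
qed

locale minim =
  fixes b \<beta> :: real and \<gamma> :: "real \<Rightarrow> real"
  assumes b: "0 < b" and adm: "admissible b \<beta> \<gamma>"
    and mini: "\<forall>\<eta>. admissible b \<beta> \<eta> \<longrightarrow> Lfun b \<gamma> \<le> Lfun b \<eta>"

begin

lemma cont: "continuous_on {0..b} \<gamma>"
  and diffw: "\<forall>t\<in>{0<..b}. \<gamma> differentiable (at t within {0..b})"
  and pcont: "continuous_on {0<..b} (dcurve b \<gamma>)"
  and pos: "\<forall>t\<in>{0<..b}. \<gamma> t > 0" and g0: "\<gamma> 0 = 0" and gb: "\<gamma> b = \<beta>"
  and ie: "improper_integral_exists b (Lintegrand b \<gamma>)"
  using adm unfolding admissible_def by auto

lemma hasvd: "t \<in> {0<..b} \<Longrightarrow> (\<gamma> has_vector_derivative dcurve b \<gamma> t) (at t within {0..b})"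
  using diffw vector_derivative_works unfolding dcurve_def by blast

lemma hasrd: "t \<in> {0<..<b} \<Longrightarrow> (\<gamma> has_real_derivative dcurve b \<gamma> t) (at t)"
  using hasvd[of t] at_within_Icc_at[of 0 t b]
  by (auto simp: has_real_derivative_iff_has_vector_derivative)

lemma cont': "continuous_on {0<..b} \<gamma>"
  by (rule continuous_on_subset[OF cont]) auto

lemma Lint_g_cont: "continuous_on {0<..b} (Lintegrand b \<gamma>)"
  unfolding Lintegrand_def[abs_def]
  by (rule Lint_cont) (use cont' pcont pos in auto)

end

lemma sqpos: "(Y::real) > 0 \<Longrightarrow> sqrt ((1 + q\<^sup>2) / Y) > 0"
  by (simp add: add_pos_nonneg)

context minim begin

lemma first_var:
  fixes \<phi> \<phi>' :: "real \<Rightarrow> real" and c d :: real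
  assumes cd: "0 < c" "c < d" "d < b"
    and phd: "\<forall>t\<in>{0..b}. (\<phi> has_real_derivative \<phi>' t) (at t within {0..b})"
    and phc: "continuous_on {0..b} \<phi>'"
    and phz: "\<forall>t\<in>{0..b}. t \<le> c \<or> d \<le> t \<longrightarrow> \<phi> t = 0 \<and> \<phi>' t = 0"
  shows "integral {c..d} (\<lambda>t. AA b \<gamma> t * \<phi> t + BB b \<gamma> t * \<phi>' t) = 0"
proof -
  define p where "p = dcurve b \<gamma>"
  have phic: "continuous_on {0..b} \<phi>"
    using phd by (metis DERIV_continuous continuous_on_eq_continuous_within)
  obtain x0 where x0: "x0 \<in> {c..d}" "\<forall>y\<in>{c..d}. \<gamma> x0 \<le> \<gamma> y"
    using continuous_attains_inf[of "{c..d}" \<gamma>] continuous_on_subset[OF cont] cd by force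
  define m where "m = \<gamma> x0"
  have m: "m > 0" "\<forall>t\<in>{c..d}. m \<le> \<gamma> t" using x0 pos cd unfolding m_def by auto
  obtain x1 where x1: "x1 \<in> {0..b}" "\<forall>y\<in>{0..b}. \<bar>\<phi> y\<bar> \<le> \<bar>\<phi> x1\<bar>"
    using continuous_attains_sup[of "{0..b}" "\<lambda>t. \<bar>\<phi> t\<bar>"] continuous_on_rabs[OF phic] b by force
  define M where "M = \<bar>\<phi> x1\<bar> + 1"
  have M: "M > 0" "\<forall>t\<in>{0..b}. \<bar>\<phi> t\<bar> \<le> M" using x1 unfolding M_def by force+
  define \<delta> where "\<delta> = m / (2 * M)"
  have \<delta>: "\<delta> > 0" using m M unfolding \<delta>_def by auto
  define U where "U = {-\<delta>..\<delta>}"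
  define f where "f e t = sqrt ((1 + (p t + e * \<phi>' t)\<^sup>2) / (\<gamma> t + e * \<phi> t))" for e t
  define fx where "fx e t = (inverse (sqrt ((1 + (p t + e * \<phi>' t)\<^sup>2) / (\<gamma> t + e * \<phi> t))) / 2) *
     (((2 * (p t + e * \<phi>' t) * \<phi>' t) * (\<gamma> t + e * \<phi> t) - (1 + (p t + e * \<phi>' t)\<^sup>2) * \<phi> t)
       / ((\<gamma> t + e * \<phi> t) * (\<gamma> t + e * \<phi> t)))" for e t
  have ypos: "\<gamma> t + e * \<phi> t > 0" if "e \<in> U" "t \<in> {0<..b}" for e t
  proof (cases "t \<le> c \<or> d \<le> t")
    case True then show ?thesis using phz pos that by auto
  next
    case False
    then have t: "t \<in> {c..d}" by auto
    have "\<bar>e * \<phi> t\<bar> \<le> \<delta> * M"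
      unfolding abs_mult using that M t cd U_def \<delta> by (intro mult_mono) auto
    also have "\<delta> * M = m / 2" unfolding \<delta>_def using M by (simp add: field_simps)
    finally have "\<bar>e * \<phi> t\<bar> \<le> m/2" .
    moreover have "m \<le> \<gamma> t" using m t by auto
    ultimately show ?thesis using m by linarith
  qed
  define \<eta> where "\<eta> e = (\<lambda>t. \<gamma> t + e * \<phi> t)" for e
  have etar: "(\<eta> e has_real_derivative (p t + e * \<phi>' t)) (at t within {0..b})" if "t \<in> {0<..b}" for e t
    unfolding \<eta>_def
    by (rule DERIV_add[OF _ DERIV_cmult]) (use hasvd[OF that] phd that in \<open>auto simp: p_def has_real_derivative_iff_has_vector_derivative\<close>)
  have etav: "(\<eta> e has_vector_derivative (p t + e * \<phi>' t)) (at t within {0..b})" if "t \<in> {0<..b}" for e t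
    using etar[OF that] by (simp add: has_real_derivative_iff_has_vector_derivative)
  have dc: "dcurve b (\<eta> e) t = p t + e * \<phi>' t" if "t \<in> {0<..b}" for e t
    unfolding dcurve_def
    by (rule vector_derivative_within_cbox[of 0 b, unfolded cbox_interval]) (use b that etav[OF that] in auto)
  have Lint_eta: "Lintegrand b (\<eta> e) t = f e t" if "t \<in> {0<..b}" for e t
    unfolding Lintegrand_def f_def dc[OF that] by (simp add: \<eta>_def)
  have Lint_g: "Lintegrand b \<gamma> t = f 0 t" if "t \<in> {0<..b}" for t
    unfolding Lintegrand_def f_def by (simp add: p_def)
  have pc: "continuous_on {0<..b} p" using pcont p_def by simp
  have phic': "continuous_on {0<..b} \<phi>" "continuous_on {0<..b} \<phi>'"
    by (rule continuous_on_subset[OF phic], force) (rule continuous_on_subset[OF phc], force)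
  have fcont: "continuous_on {0<..b} (f e)" if "e \<in> U" for e
    unfolding f_def
    by (rule Lint_cont[where y="\<lambda>t. \<gamma> t + e * \<phi> t" and q="\<lambda>t. p t + e * \<phi>' t"])
      (use ypos[OF that] cont' pc phic' in \<open>auto intro!: continuous_intros\<close>)
  have Leta_cont: "continuous_on {0<..b} (Lintegrand b (\<eta> e))" if "e \<in> U" for e
    using continuous_on_eq[OF fcont[OF that]] Lint_eta by auto
  have shift: "improper_integral_exists b (Lintegrand b (\<eta> e)) \<and>
    Lfun b (\<eta> e) = Lfun b \<gamma> + (integral {c..d} (Lintegrand b (\<eta> e)) - integral {c..d} (Lintegrand b \<gamma>))"
    if "e \<in> U" for e
  proof (rule Lfun_shift[OF ie Lint_g_cont Leta_cont[OF that]])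
    show "0 < c" "c \<le> d" "d \<le> b" using cd by auto
    show "\<forall>t\<in>{0<..b}. t \<le> c \<or> d \<le> t \<longrightarrow> Lintegrand b (\<eta> e) t = Lintegrand b \<gamma> t"
      using phz Lint_eta Lint_g by (auto simp: f_def)
  qed
  have admE: "admissible b \<beta> (\<eta> e)" if "e \<in> U" for e
    unfolding admissible_def
  proof (intro conjI)
    show "continuous_on {0..b} (\<eta> e)" unfolding \<eta>_def using cont phic by (intro continuous_intros)
    show "\<forall>t\<in>{0<..b}. \<eta> e differentiable at t within {0..b}"
      using etav differentiableI_vector by blast
    show "continuous_on {0<..b} (dcurve b (\<eta> e))"
    proof (rule continuous_on_eq)
      show "continuous_on {0<..b} (\<lambda>t. p t + e * \<phi>' t)" using pc phic' by (intro continuous_intros)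
    qed (use dc in auto)
    show "\<forall>t\<in>{0<..b}. 0 < \<eta> e t" using ypos[OF that] \<eta>_def by auto
    show "\<eta> e 0 = 0" using g0 phz cd b unfolding \<eta>_def by auto
    show "\<eta> e b = \<beta>" using gb phz cd b unfolding \<eta>_def by auto
    show "improper_integral_exists b (Lintegrand b (\<eta> e))" using shift[OF that] by blast
  qed
  define J where "J e = integral {c..d} (f e)" for e
  have Jmin: "J 0 \<le> J e" if "e \<in> U" for e
  proof -
    have "Lfun b \<gamma> \<le> Lfun b (\<eta> e)" using mini admE[OF that] by blast
    then have "0 \<le> integral {c..d} (Lintegrand b (\<eta> e)) - integral {c..d} (Lintegrand b \<gamma>)"
      using shift[OF that] by linarith
    moreover have "integral {c..d} (Lintegrand b (\<eta> e)) = J e" unfolding J_def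
      by (rule integral_cong) (use Lint_eta cd in auto)
    moreover have "integral {c..d} (Lintegrand b \<gamma>) = J 0" unfolding J_def
      by (rule integral_cong) (use Lint_g cd in auto)
    ultimately show ?thesis by simp
  qed
  have cdsub: "{c..d} \<subseteq> {0<..b}" using cd by auto
  have fder: "((\<lambda>e. f e t) has_field_derivative fx e t) (at e within U)" if "e \<in> U" "t \<in> cbox c d" for e t
    unfolding f_def fx_def by (rule sqrt_deriv_step) (use ypos[OF that(1)] that cdsub in auto)
  have fint: "f e integrable_on cbox c d" if "e \<in> U" for e
    unfolding cbox_interval by (rule integrable_continuous_real, rule continuous_on_subset[OF fcont[OF that] cdsub])
  have sc: "continuous_on (U \<times> {c..d}) (\<lambda>x. h (snd x))" if "continuous_on {0<..b} h" for h :: "real \<Rightarrow> real"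
    by (rule continuous_on_compose2[OF that continuous_on_snd]) (use cdsub in auto)
  have ypos2: "\<forall>x\<in>U \<times> {c..d}. \<gamma> (snd x) + fst x * \<phi> (snd x) > 0"
  proof
    fix x assume "x \<in> U \<times> {c..d}"
    then have "fst x \<in> U" "snd x \<in> {0<..b}" using cdsub by auto
    then show "\<gamma> (snd x) + fst x * \<phi> (snd x) > 0" using ypos by blast
  qed
  have cfx: "continuous_on (U \<times> cbox c d) (\<lambda>(e, t). fx e t)"
  proof -
    define S where "S = U \<times> {c..d}"
    have ne1: "\<forall>x\<in>S. \<gamma> (snd x) + fst x * \<phi> (snd x) \<noteq> 0" using ypos2 S_def by force
    have ne2: "\<forall>x\<in>S. (\<gamma> (snd x) + fst x * \<phi> (snd x)) * (\<gamma> (snd x) + fst x * \<phi> (snd x)) \<noteq> 0"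
      using ne1 by simp
    have ne3: "\<forall>x\<in>S. sqrt ((1 + (p (snd x) + fst x * \<phi>' (snd x))\<^sup>2) / (\<gamma> (snd x) + fst x * \<phi> (snd x))) \<noteq> 0"
    proof
      fix x assume "x \<in> S"
      then have "\<gamma> (snd x) + fst x * \<phi> (snd x) > 0" using ypos2 S_def by blast
      then show "sqrt ((1 + (p (snd x) + fst x * \<phi>' (snd x))\<^sup>2) / (\<gamma> (snd x) + fst x * \<phi> (snd x))) \<noteq> 0"
        using sqpos by (metis less_irrefl)
    qed
    show ?thesis unfolding cbox_interval case_prod_unfold fx_def S_def[symmetric]
      using sc[OF cont'] sc[OF pc] sc[OF phic'(1)] sc[OF phic'(2)] ne1 ne2 ne3 unfolding S_def[symmetric]
      by (intro continuous_intros; (assumption | simp)?)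
  qed
  have "(J has_field_derivative integral (cbox c d) (fx 0)) (at 0 within U)"
    unfolding J_def cbox_interval[symmetric]
    by (rule leibniz_rule_field_derivative[OF fder fint cfx]) (use \<delta> U_def in auto)
  then have "(J has_field_derivative integral (cbox c d) (fx 0)) (at 0)"
    using at_within_Icc_at[of "-\<delta>" 0 \<delta>] \<delta> U_def by auto
  then have z: "integral {c..d} (fx 0) = 0"
    unfolding cbox_interval[symmetric]
    by (rule DERIV_local_min[OF _ \<delta>]) (use Jmin U_def in \<open>auto simp: abs_less_iff\<close>)
  have "integral {c..d} (fx 0) = integral {c..d} (\<lambda>t. AA b \<gamma> t * \<phi> t + BB b \<gamma> t * \<phi>' t)"
  proof (rule integral_cong)
    fix t assume t: "t \<in> {c..d}"
    have g: "\<gamma> t > 0" using pos t cdsub by auto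
    have S: "sqrt ((1 + (p t)\<^sup>2) / \<gamma> t) > 0" using g by (simp add: add_pos_nonneg)
    show "fx 0 t = AA b \<gamma> t * \<phi> t + BB b \<gamma> t * \<phi>' t"
      unfolding fx_def AA_def BB_def p_def[symmetric] using g S
      by (simp add: field_simps power2_eq_square)
  qed
  then show ?thesis using z by simp
qed
end

context minim begin

lemma Bcont: "continuous_on {0<..b} (BB b \<gamma>)"
  and Acont: "continuous_on {0<..b} (AA b \<gamma>)"
proof -
  have S: "\<forall>t\<in>{0<..b}. sqrt ((1 + (dcurve b \<gamma> t)\<^sup>2) / \<gamma> t) > 0" using pos sqpos by blast
  have g: "\<forall>t\<in>{0<..b}. \<gamma> t \<noteq> 0" using pos by force
  show "continuous_on {0<..b} (BB b \<gamma>)" unfolding BB_def[abs_def]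
    using cont' pcont S g by (intro continuous_intros; (force | assumption)?)
  show "continuous_on {0<..b} (AA b \<gamma>)" unfolding AA_def[abs_def]
    using cont' pcont S g by (intro continuous_intros; (force | assumption)?)
qed

lemma EL_cd:
  assumes cd: "0 < c" "c < d" "d < b"
  shows "\<exists>k. \<forall>t\<in>{c<..<d}. BB b \<gamma> t = integral {c..t} (AA b \<gamma>) + k"
proof -
  define A where "A = AA b \<gamma>"
  define B where "B = BB b \<gamma>"
  have cdsub: "{c..d} \<subseteq> {0<..b}" using cd by auto
  have Ac: "continuous_on {c..d} A" using continuous_on_subset[OF Acont cdsub] A_def by simp
  have Bc: "continuous_on {c..d} B" using continuous_on_subset[OF Bcont cdsub] B_def by simp
  define G where "G t = integral {c..t} A" for t
  have Gd: "(G has_real_derivative A t) (at t within {c..d})" if "t \<in> {c..d}" for t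
    unfolding G_def by (rule integral_has_real_derivative[OF Ac that])
  have Gc: "continuous_on {c..d} G"
    using Gd by (metis DERIV_continuous continuous_on_eq_continuous_within)
  define H where "H t = B t - G t" for t
  have Hc: "continuous_on {c..d} H" unfolding H_def[abs_def] using Bc Gc by (intro continuous_intros)
  define cl where "cl t = max c (min d t)" for t
  have clc: "continuous_on UNIV cl" unfolding cl_def[abs_def] by (intro continuous_intros)
  have clr: "cl t \<in> {c..d}" for t using cd unfolding cl_def by auto
  have cli: "t \<in> {c..d} \<Longrightarrow> cl t = t" for t unfolding cl_def by auto
  have HCc: "continuous_on UNIV (\<lambda>t. H (cl t))"
    by (rule continuous_on_compose2[OF Hc clc]) (use clr in auto)
  define w where "w t = max 0 ((t - c) * (d - t))" for t
  have wc: "continuous_on UNIV w" unfolding w_def[abs_def] by (intro continuous_intros)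
  have w0: "w t = 0" if "t \<le> c \<or> d \<le> t" for t
  proof -
    have "(t - c) * (d - t) \<le> 0" using that cd by (auto simp: mult_le_0_iff)
    then show ?thesis unfolding w_def by simp
  qed
  have wpos: "w t > 0" if "t \<in> {c<..<d}" for t using that unfolding w_def by simp
  have wnn: "w t \<ge> 0" for t unfolding w_def by simp
  define Iw where "Iw = integral {c..d} w"
  have Iw: "Iw > 0"
  proof -
    have "0 \<le> Iw" unfolding Iw_def
      by (rule Henstock_Kurzweil_Integration.integral_nonneg)
        (auto intro!: integrable_continuous_real continuous_on_subset[OF wc] wnn)
    moreover have "Iw \<noteq> 0"
    proof
      assume "Iw = 0"
      then have "\<forall>x\<in>{c..d}. w x = 0"
        using integral_eq_0_iff[of c d w] continuous_on_subset[OF wc] cd wnn unfolding Iw_def by auto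
      moreover have "w ((c+d)/2) > 0" using wpos cd by auto
      ultimately show False using cd by auto
    qed
    ultimately show ?thesis by simp
  qed
  define k where "k = integral {c..d} (\<lambda>t. H t * w t) / Iw"
  define g where "g t = (H (cl t) - k) * w t" for t
  have gc: "continuous_on UNIV g" unfolding g_def[abs_def] using HCc wc by (intro continuous_intros)
  have g0: "g t = 0" if "t \<le> c \<or> d \<le> t" for t unfolding g_def using w0[OF that] by simp
  have gcd: "g t = (H t - k) * w t" if "t \<in> {c..d}" for t unfolding g_def using cli[OF that] by simp
  have intHw: "(\<lambda>t. H t * w t) integrable_on {c..d}"
    using Hc continuous_on_subset[OF wc] by (auto intro!: integrable_continuous_real continuous_intros)
  have intw: "w integrable_on {c..d}"
    using continuous_on_subset[OF wc] by (auto intro!: integrable_continuous_real)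
  have Ig: "integral {c..d} g = 0"
  proof -
    have "integral {c..d} g = integral {c..d} (\<lambda>t. H t * w t - k * w t)"
      by (rule integral_cong) (simp add: gcd algebra_simps)
    also have "\<dots> = integral {c..d} (\<lambda>t. H t * w t) - k * Iw"
    proof -
      have "(\<lambda>t. k * w t) integrable_on {c..d}"
        using continuous_on_subset[OF wc] by (auto intro!: integrable_continuous_real continuous_intros)
      then show ?thesis using integral_diff[OF intHw] unfolding Iw_def by simp
    qed
    also have "\<dots> = 0" unfolding k_def using Iw by simp
    finally show ?thesis .
  qed
  define \<phi> where "\<phi> t = integral {0..t} g" for t
  have phd: "\<forall>t\<in>{0..b}. (\<phi> has_real_derivative g t) (at t within {0..b})"
    unfolding \<phi>_def[abs_def] using integral_has_real_derivative[OF continuous_on_subset[OF gc]] by blast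
  have phc: "continuous_on {0..b} g" using continuous_on_subset[OF gc] by blast
  have gint: "g integrable_on {x..y}" for x y using continuous_on_subset[OF gc] by (auto intro!: integrable_continuous_real)
  have phz: "\<forall>t\<in>{0..b}. t \<le> c \<or> d \<le> t \<longrightarrow> \<phi> t = 0 \<and> g t = 0"
  proof (intro ballI impI conjI)
    fix t assume t: "t \<in> {0..b}" and tt: "t \<le> c \<or> d \<le> t"
    show "g t = 0" using g0 tt by blast
    show "\<phi> t = 0"
    proof (cases "t \<le> c")
      case True
      have "\<phi> t = integral {0..t} (\<lambda>_. 0::real)" unfolding \<phi>_def
        by (rule integral_cong) (use g0 True in auto)
      then show ?thesis by simp
    next
      case False
      then have td: "d \<le> t" using tt by auto
      have z1: "integral {0..c} g = 0"
        using integral_cong[of "{0..c}" g "\<lambda>_. 0"] g0 by simp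
      have z2: "integral {d..t} g = 0"
        using integral_cong[of "{d..t}" g "\<lambda>_. 0"] g0 by simp
      have "integral {0..c} g + integral {c..t} g = integral {0..t} g"
        by (rule Henstock_Kurzweil_Integration.integral_combine) (use cd td gint in auto)
      moreover have "integral {c..d} g + integral {d..t} g = integral {c..t} g"
        by (rule Henstock_Kurzweil_Integration.integral_combine) (use cd td gint in auto)
      ultimately show ?thesis unfolding \<phi>_def using z1 z2 Ig by simp
    qed
  qed
  have fv: "integral {c..d} (\<lambda>t. A t * \<phi> t + B t * g t) = 0"
    unfolding A_def B_def by (rule first_var[OF cd phd phc phz])
  have cdsub2: "{c..d} \<subseteq> {0..b}" using cd by auto
  have phdc: "(\<phi> has_real_derivative g t) (at t within {c..d})" if "t \<in> {c..d}" for t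
    using has_field_derivative_subset[OF bspec[OF phd] cdsub2] that cdsub2 by blast
  have phcc: "continuous_on {c..d} \<phi>"
    using phdc by (metis DERIV_continuous continuous_on_eq_continuous_within)
  have gcc: "continuous_on {c..d} g" using continuous_on_subset[OF gc] by blast
  have "((\<lambda>t. A t * \<phi> t + g t * G t) has_integral (G d * \<phi> d - G c * \<phi> c)) {c..d}"
  proof (rule fundamental_theorem_of_calculus)
    show "c \<le> d" using cd by simp
    fix t assume t: "t \<in> {c..d}"
    show "((\<lambda>t. G t * \<phi> t) has_vector_derivative (A t * \<phi> t + g t * G t)) (at t within {c..d})"
      using DERIV_mult[OF Gd[OF t] phdc[OF t]]
      by (simp add: has_real_derivative_iff_has_vector_derivative)
  qed
  moreover have "G c = 0" unfolding G_def by simp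
  moreover have "\<phi> d = 0" using phz cd by auto
  ultimately have ibp: "integral {c..d} (\<lambda>t. A t * \<phi> t + g t * G t) = 0"
    by (simp add: integral_unique)
  have i1: "(\<lambda>t. A t * \<phi> t + B t * g t) integrable_on {c..d}"
    using Ac phcc Bc gcc by (auto intro!: integrable_continuous_real continuous_intros)
  have i2: "(\<lambda>t. A t * \<phi> t + g t * G t) integrable_on {c..d}"
    using Ac phcc Gc gcc by (auto intro!: integrable_continuous_real continuous_intros)
  have "integral {c..d} (\<lambda>t. (A t * \<phi> t + B t * g t) - (A t * \<phi> t + g t * G t)) = 0"
    using integral_diff[OF i1 i2] fv ibp by simp
  then have hh: "integral {c..d} (\<lambda>t. H t * ((H t - k) * w t)) = 0"
  proof -
    assume a: "integral {c..d} (\<lambda>t. (A t * \<phi> t + B t * g t) - (A t * \<phi> t + g t * G t)) = 0"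
    have "integral {c..d} (\<lambda>t. H t * ((H t - k) * w t)) =
          integral {c..d} (\<lambda>t. (A t * \<phi> t + B t * g t) - (A t * \<phi> t + g t * G t))"
      by (rule integral_cong) (simp add: gcd H_def algebra_simps)
    then show ?thesis using a by simp
  qed
  have i3: "(\<lambda>t. H t * ((H t - k) * w t)) integrable_on {c..d}"
    using Hc continuous_on_subset[OF wc] by (auto intro!: integrable_continuous_real continuous_intros)
  have i4: "(\<lambda>t. k * ((H t - k) * w t)) integrable_on {c..d}"
    using Hc continuous_on_subset[OF wc] by (auto intro!: integrable_continuous_real continuous_intros)
  have Ig': "integral {c..d} (\<lambda>t. (H t - k) * w t) = 0"
    using Ig integral_cong[of "{c..d}" g "\<lambda>t. (H t - k) * w t"] gcd by simp
  have "integral {c..d} (\<lambda>t. (H t - k)\<^sup>2 * w t) =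
        integral {c..d} (\<lambda>t. H t * ((H t - k) * w t) - k * ((H t - k) * w t))"
    by (rule integral_cong) (simp add: power2_eq_square algebra_simps)
  also have "\<dots> = 0" using integral_diff[OF i3 i4] hh Ig' by simp
  finally have z: "integral {c..d} (\<lambda>t. (H t - k)\<^sup>2 * w t) = 0" .
  have cz: "continuous_on {c..d} (\<lambda>t. (H t - k)\<^sup>2 * w t)"
    using Hc continuous_on_subset[OF wc] by (auto intro!: continuous_intros)
  have zz: "\<forall>t\<in>{c..d}. (H t - k)\<^sup>2 * w t = 0"
    using integral_eq_0_iff[OF cz] z cd wnn by simp
  show ?thesis
  proof (intro exI ballI)
    fix t assume t: "t \<in> {c<..<d}"
    then have "(H t - k)\<^sup>2 * w t = 0" using zz by auto
    then have "H t = k" using wpos[OF t] by simp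
    then show "BB b \<gamma> t = integral {c..t} (AA b \<gamma>) + k" unfolding H_def G_def B_def A_def by simp
  qed
qed

end

lemma alg1:
  fixes y q S :: real
  assumes y: "y > 0" and S: "S = sqrt ((1 + q\<^sup>2) / y)"
  shows "(- (1 + q\<^sup>2) / (2 * y\<^sup>2 * S)) * (q / (y * S)) = - q / (2 * y\<^sup>2)"
proof -
  have Sp: "S > 0" using S y by (simp add: add_pos_nonneg)
  have SS: "S * S = (1 + q\<^sup>2) / y" using S y by (simp add: add_pos_nonneg)
  have q1: "1 + q\<^sup>2 > 0" by (simp add: add_pos_nonneg)
  have e1: "(- (1 + q\<^sup>2) / (2 * y\<^sup>2 * S)) * (q / (y * S)) = - (1 + q\<^sup>2) * q / (2 * y\<^sup>2 * y * (S * S))"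
    by (simp add: field_simps)
  have e2: "2 * y\<^sup>2 * y * ((1 + q\<^sup>2) / y) = (1 + q\<^sup>2) * (2 * y\<^sup>2)"
    using y by (simp add: field_simps)
  have e3: "- (1 + q\<^sup>2) * q / (2 * y\<^sup>2 * y * (S * S)) = ((1 + q\<^sup>2) * (- q)) / ((1 + q\<^sup>2) * (2 * y\<^sup>2))"
    unfolding SS e2 by (simp add: algebra_simps)
  have ne: "1 + q\<^sup>2 \<noteq> 0" using q1 by simp
  have e4: "((1 + q\<^sup>2) * (- q)) / ((1 + q\<^sup>2) * (2 * y\<^sup>2)) = - q / (2 * y\<^sup>2)"
    by (simp only: mult_divide_mult_cancel_left[OF ne])
  show ?thesis by (simp only: e1 e3 e4)
qed

lemma alg2:
  fixes y q S :: real
  assumes y: "y > 0" and S: "S = sqrt ((1 + q\<^sup>2) / y)"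
  shows "inverse y - (q / (y * S))\<^sup>2 = 1 / (y * (1 + q\<^sup>2))"
proof -
  have Sp: "S > 0" using S y by (simp add: add_pos_nonneg)
  have SS: "S\<^sup>2 = (1 + q\<^sup>2) / y" using S y by (simp add: add_pos_nonneg)
  have q1: "1 + q\<^sup>2 > 0" by (simp add: add_pos_nonneg)
  have "(q / (y * S))\<^sup>2 = q\<^sup>2 / (y\<^sup>2 * S\<^sup>2)" by (simp add: power_divide power_mult_distrib)
  also have "y\<^sup>2 * ((1 + q\<^sup>2) / y) = y * (1 + q\<^sup>2)" using y by (simp add: power2_eq_square)
  then have "q\<^sup>2 / (y\<^sup>2 * S\<^sup>2) = q\<^sup>2 / (y * (1 + q\<^sup>2))" unfolding SS by simp
  finally have e: "(q / (y * S))\<^sup>2 = q\<^sup>2 / (y * (1 + q\<^sup>2))" .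
  have ne: "y * (1 + q\<^sup>2) \<noteq> 0" using mult_pos_pos[OF y q1] by linarith
  have inv: "inverse y = (1 + q\<^sup>2) / (y * (1 + q\<^sup>2))" using y q1 by (simp add: inverse_eq_divide)
  show ?thesis unfolding e inv diff_divide_distrib[symmetric] by simp
qed

lemma alg3:
  fixes y q S :: real
  assumes y: "y > 0" and S: "S = sqrt ((1 + q\<^sup>2) / y)"
  shows "q = (q / (y * S)) * sqrt (y * (1 + q\<^sup>2))"
proof -
  have Sp: "S > 0" using S y by (simp add: add_pos_nonneg)
  have "y * S = sqrt (y\<^sup>2) * S" using y by simp
  also have "\<dots> = sqrt (y * (1 + q\<^sup>2))" unfolding S real_sqrt_mult[symmetric] using y
    by (simp add: power2_eq_square)
  finally have "y * S = sqrt (y * (1 + q\<^sup>2))" .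
  then show ?thesis unfolding \<open>y * S = sqrt (y * (1 + q\<^sup>2))\<close>[symmetric] using Sp y by simp
qed

context minim begin

lemma Bder:
  assumes t: "t \<in> {0<..<b}"
  shows "(BB b \<gamma> has_real_derivative AA b \<gamma> t) (at t)"
proof -
  define c where "c = t / 2"
  define d where "d = (t + b) / 2"
  have cd: "0 < c" "c < d" "d < b" "c < t" "t < d" using t unfolding c_def d_def by auto
  obtain k where k: "\<forall>u\<in>{c<..<d}. BB b \<gamma> u = integral {c..u} (AA b \<gamma>) + k"
    using EL_cd[OF cd(1-3)] by blast
  have Ac: "continuous_on {c..d} (AA b \<gamma>)" by (rule continuous_on_subset[OF Acont]) (use cd in auto)
  have "((\<lambda>u. integral {c..u} (AA b \<gamma>)) has_real_derivative AA b \<gamma> t) (at t within {c..d})"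
    by (rule integral_has_real_derivative[OF Ac]) (use cd in auto)
  then have "((\<lambda>u. integral {c..u} (AA b \<gamma>)) has_real_derivative AA b \<gamma> t) (at t)"
    using at_within_Icc_at[of c t d] cd by simp
  then have "((\<lambda>u. integral {c..u} (AA b \<gamma>) + k) has_real_derivative AA b \<gamma> t) (at t)"
    using DERIV_add[OF _ DERIV_const] by fastforce
  then show ?thesis
    by (rule has_field_derivative_transform_within_open[of _ _ _ "{c<..<d}"]) (use cd k in auto)
qed

lemma Aneg: "t \<in> {0<..b} \<Longrightarrow> AA b \<gamma> t < 0"
proof -
  assume t: "t \<in> {0<..b}"
  have g: "\<gamma> t > 0" using pos t by auto
  have S: "sqrt ((1 + (dcurve b \<gamma> t)\<^sup>2) / \<gamma> t) > 0" using sqpos[OF g] .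
  have "1 + (dcurve b \<gamma> t)\<^sup>2 > 0" by (simp add: add_pos_nonneg)
  then show ?thesis unfolding AA_def using g S by (simp add: divide_neg_pos)
qed

lemma Bdec: "0 < s \<Longrightarrow> s < t \<Longrightarrow> t < b \<Longrightarrow> BB b \<gamma> t < BB b \<gamma> s"
proof -
  assume st: "0 < s" "s < t" "t < b"
  show ?thesis
  proof (rule DERIV_neg_imp_decreasing_open[OF st(2)])
    fix x assume "s < x" "x < t"
    then show "\<exists>y. (BB b \<gamma> has_real_derivative y) (at x) \<and> y < 0"
      using Bder[of x] Aneg[of x] st by auto
  next
    show "continuous_on {s..t} (BB b \<gamma>)" by (rule continuous_on_subset[OF Bcont]) (use st in auto)
  qed
qed

lemma Kconst: "\<exists>C>0. \<forall>t\<in>{0<..<b}. \<gamma> t * (1 + (dcurve b \<gamma> t)\<^sup>2) = C"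
proof -
  define K where "K t = inverse (\<gamma> t) - (BB b \<gamma> t)\<^sup>2" for t
  have Kd: "(K has_real_derivative 0) (at t)" if t: "t \<in> {0<..<b}" for t
  proof -
    have g: "\<gamma> t > 0" using pos t by auto
    have d1: "((\<lambda>t. inverse (\<gamma> t)) has_real_derivative - (dcurve b \<gamma> t * inverse (\<gamma> t ^ Suc (Suc 0)))) (at t)"
      using DERIV_inverse_fun[OF hasrd[OF t]] g by simp
    have d2: "((\<lambda>t. (BB b \<gamma> t)\<^sup>2) has_real_derivative (2 * BB b \<gamma> t * AA b \<gamma> t)) (at t)"
      using DERIV_mult[OF Bder[OF t] Bder[OF t]] by (simp add: power2_eq_square algebra_simps)
    have al: "AA b \<gamma> t * BB b \<gamma> t = - dcurve b \<gamma> t / (2 * (\<gamma> t)\<^sup>2)"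
      unfolding AA_def BB_def by (rule alg1[OF g refl])
    have "- (dcurve b \<gamma> t * inverse (\<gamma> t ^ Suc (Suc 0))) - 2 * BB b \<gamma> t * AA b \<gamma> t = 0"
      using al g by (simp add: field_simps power2_eq_square)
    then show ?thesis using DERIV_diff[OF d1 d2] unfolding K_def by simp
  qed
  define t0 where "t0 = b / 2"
  have t0: "t0 \<in> {0<..<b}" using b t0_def by auto
  have Kc: "K t = K t0" if "t \<in> {0<..<b}" for t
    by (rule DERIV_isconst3[OF b that t0 Kd]) auto
  have Kf: "K t = 1 / (\<gamma> t * (1 + (dcurve b \<gamma> t)\<^sup>2))" if "t \<in> {0<..<b}" for t
  proof -
    have g: "\<gamma> t > 0" using pos that by auto
    show ?thesis unfolding K_def BB_def by (rule alg2[OF g refl])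
  qed
  have ppos: "\<gamma> t * (1 + (dcurve b \<gamma> t)\<^sup>2) > 0" if "t \<in> {0<..<b}" for t
    using pos that by (auto intro!: mult_pos_pos simp: add_pos_nonneg)
  show ?thesis
  proof (intro exI[of _ "\<gamma> t0 * (1 + (dcurve b \<gamma> t0)\<^sup>2)"] conjI ballI)
    show "\<gamma> t0 * (1 + (dcurve b \<gamma> t0)\<^sup>2) > 0" using ppos[OF t0] .
    fix t assume t: "t \<in> {0<..<b}"
    have "1 / (\<gamma> t * (1 + (dcurve b \<gamma> t)\<^sup>2)) = 1 / (\<gamma> t0 * (1 + (dcurve b \<gamma> t0)\<^sup>2))"
      using Kc[OF t] Kf[OF t] Kf[OF t0] by simp
    then show "\<gamma> t * (1 + (dcurve b \<gamma> t)\<^sup>2) = \<gamma> t0 * (1 + (dcurve b \<gamma> t0)\<^sup>2)"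
      by simp
  qed
qed

end

context minim begin

lemma pdec: "0 < s \<Longrightarrow> s < t \<Longrightarrow> t < b \<Longrightarrow> dcurve b \<gamma> t < dcurve b \<gamma> s"
proof -
  assume st: "0 < s" "s < t" "t < b"
  obtain C where C: "C > 0" "\<forall>t\<in>{0<..<b}. \<gamma> t * (1 + (dcurve b \<gamma> t)\<^sup>2) = C"
    using Kconst by blast
  have pf: "dcurve b \<gamma> u = BB b \<gamma> u * sqrt C" if "u \<in> {0<..<b}" for u
  proof -
    have g: "\<gamma> u > 0" using pos that by auto
    show ?thesis using alg3[OF g refl, of "dcurve b \<gamma> u"] C that unfolding BB_def by auto
  qed
  have "BB b \<gamma> t * sqrt C < BB b \<gamma> s * sqrt C"
    using Bdec[OF st] C by simp
  then show ?thesis using pf[of s] pf[of t] st by auto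
qed

lemma pdec_b: "0 < s \<Longrightarrow> s < b \<Longrightarrow> dcurve b \<gamma> b < dcurve b \<gamma> s"
proof -
  assume s: "0 < s" "s < b"
  define m where "m = (s + b) / 2"
  have m: "s < m" "m < b" using s unfolding m_def by auto
  have pc: "continuous_on {m..b} (dcurve b \<gamma>)" by (rule continuous_on_subset[OF pcont]) (use s m in auto)
  then have "(dcurve b \<gamma> \<longlongrightarrow> dcurve b \<gamma> b) (at_left b)"
  proof -
    have "(dcurve b \<gamma> \<longlongrightarrow> dcurve b \<gamma> b) (at b within {m..b})"
      using pc m unfolding continuous_on_def by auto
    then show ?thesis using at_within_Icc_at_left[of m b] m by simp
  qed
  moreover have "eventually (\<lambda>u. dcurve b \<gamma> m \<ge> dcurve b \<gamma> u) (at_left b)"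
    using eventually_at_left_real[OF m(2)] by eventually_elim (use pdec m s in \<open>auto intro: less_imp_le\<close>)
  ultimately have "dcurve b \<gamma> m \<ge> dcurve b \<gamma> b" by (rule tendsto_upperbound) simp
  then show ?thesis using pdec[of s m] s m by auto
qed

lemma pinj: "0 < s \<Longrightarrow> s < t \<Longrightarrow> t \<le> b \<Longrightarrow> dcurve b \<gamma> t < dcurve b \<gamma> s"
  using pdec pdec_b by (cases "t = b") auto

lemma incr: "0 \<le> s \<Longrightarrow> s < t \<Longrightarrow> t \<le> b \<Longrightarrow> (\<forall>x. s < x \<and> x < t \<longrightarrow> dcurve b \<gamma> x > 0) \<Longrightarrow> \<gamma> s < \<gamma> t"
proof -
  assume st: "0 \<le> s" "s < t" "t \<le> b" and px: "\<forall>x. s < x \<and> x < t \<longrightarrow> dcurve b \<gamma> x > 0"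
  show ?thesis
  proof (rule DERIV_pos_imp_increasing_open[OF st(2)])
    fix x assume "s < x" "x < t"
    then show "\<exists>y. (\<gamma> has_real_derivative y) (at x) \<and> y > 0" using hasrd[of x] px st by auto
  next
    show "continuous_on {s..t} \<gamma>" by (rule continuous_on_subset[OF cont]) (use st in auto)
  qed
qed

lemma decr: "0 \<le> s \<Longrightarrow> s < t \<Longrightarrow> t \<le> b \<Longrightarrow> (\<forall>x. s < x \<and> x < t \<longrightarrow> dcurve b \<gamma> x < 0) \<Longrightarrow> \<gamma> s > \<gamma> t"
proof -
  assume st: "0 \<le> s" "s < t" "t \<le> b" and px: "\<forall>x. s < x \<and> x < t \<longrightarrow> dcurve b \<gamma> x < 0"
  show ?thesis
  proof (rule DERIV_neg_imp_decreasing_open[OF st(2)])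
    fix x assume "s < x" "x < t"
    then show "\<exists>y. (\<gamma> has_real_derivative y) (at x) \<and> y < 0" using hasrd[of x] px st by auto
  next
    show "continuous_on {s..t} \<gamma>" by (rule continuous_on_subset[OF cont]) (use st in auto)
  qed
qed

lemma partA: "filterlim (dcurve b \<gamma>) at_top (at_right 0)"
proof -
  obtain C where C: "C > 0" "\<forall>t\<in>{0<..<b}. \<gamma> t * (1 + (dcurve b \<gamma> t)\<^sup>2) = C"
    using Kconst by blast
  have gl: "(\<gamma> \<longlongrightarrow> 0) (at_right 0)"
  proof -
    have "(\<gamma> \<longlongrightarrow> \<gamma> 0) (at 0 within {0..b})"
      using cont b unfolding continuous_on_def by auto
    then show ?thesis using at_within_Icc_at_right[of 0 b] b g0 by simp
  qed
  define h where "h = b / 2"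
  have h: "0 < h" "h < b" using b h_def by auto
  show ?thesis unfolding filterlim_at_top
  proof
    fix Z :: real
    define M where "M = max Z 0 + \<bar>dcurve b \<gamma> h\<bar> + 1"
    have M: "M > 0" "M \<ge> Z" "- M < dcurve b \<gamma> h" unfolding M_def by auto
    have M1: "1 + M\<^sup>2 > 0" by (simp add: add_pos_nonneg)
    have CM: "0 < C / (1 + M\<^sup>2)" using C(1) M1 by (rule divide_pos_pos)
    have e1: "eventually (\<lambda>u. \<gamma> u < C / (1 + M\<^sup>2)) (at_right 0)"
      by (rule order_tendstoD(2)[OF gl CM])
    show "eventually (\<lambda>u. Z \<le> dcurve b \<gamma> u) (at_right 0)"
      using e1 eventually_at_right_real[OF h(1)]
    proof eventually_elim
      case (elim u)
      then have u: "0 < u" "u < h" "\<gamma> u < C / (1 + M\<^sup>2)" by auto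
      have gu: "\<gamma> u > 0" using pos u h by auto
      have ub: "u \<in> {0<..<b}" using u h by auto
      have Cu: "\<gamma> u * (1 + (dcurve b \<gamma> u)\<^sup>2) = C" using C(2) ub by blast
      have "\<gamma> u * (1 + M\<^sup>2) < C" using u(3) M1 by (simp add: pos_less_divide_eq)
      then have "\<gamma> u * (1 + M\<^sup>2) < \<gamma> u * (1 + (dcurve b \<gamma> u)\<^sup>2)" using Cu by linarith
      then have "1 + M\<^sup>2 < 1 + (dcurve b \<gamma> u)\<^sup>2" using mult_less_cancel_left_pos[OF gu] by blast
      then have sq: "M\<^sup>2 < (dcurve b \<gamma> u)\<^sup>2" by linarith
      have lo: "dcurve b \<gamma> u > - M" using pdec[OF u(1) u(2) h(2)] M(3) by linarith
      have "M < dcurve b \<gamma> u"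
      proof (rule ccontr)
        assume "\<not> M < dcurve b \<gamma> u"
        then have "\<bar>dcurve b \<gamma> u\<bar> \<le> M" unfolding abs_le_iff using lo by linarith
        then have "\<bar>dcurve b \<gamma> u\<bar>\<^sup>2 \<le> M\<^sup>2" by (rule power_mono) simp
        then have "(dcurve b \<gamma> u)\<^sup>2 \<le> M\<^sup>2" by simp
        then show False using sq by linarith
      qed
      then show ?case using M(2) by linarith
    qed
  qed
qed

end

context minim begin

lemma partD:
  "(\<forall>s\<in>{0..b}. \<forall>t\<in>{0..b}. s < t \<longrightarrow> \<gamma> s < \<gamma> t) \<or>
   (\<exists>m\<in>{0<..<b}. (\<forall>s\<in>{0..m}. \<forall>t\<in>{0..m}. s < t \<longrightarrow> \<gamma> s < \<gamma> t) \<and>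
                  (\<forall>s\<in>{m..b}. \<forall>t\<in>{m..b}. s < t \<longrightarrow> \<gamma> s > \<gamma> t))"
proof (cases "\<exists>m\<in>{0<..<b}. dcurve b \<gamma> m = 0")
  case True
  then obtain m where m: "m \<in> {0<..<b}" "dcurve b \<gamma> m = 0" by blast
  have A: "\<forall>s\<in>{0..m}. \<forall>t\<in>{0..m}. s < t \<longrightarrow> \<gamma> s < \<gamma> t"
  proof (intro ballI impI)
    fix s t assume st: "s \<in> {0..m}" "t \<in> {0..m}" "s < t"
    show "\<gamma> s < \<gamma> t"
    proof (rule incr)
      show "0 \<le> s" "s < t" "t \<le> b" using st m by auto
      show "\<forall>x. s < x \<and> x < t \<longrightarrow> dcurve b \<gamma> x > 0"
      proof (intro allI impI)
        fix x assume x: "s < x \<and> x < t"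
        have "0 < x" "x < m" "m < b" using x st m by auto
        from pdec[OF this] show "dcurve b \<gamma> x > 0" using m(2) by linarith
      qed
    qed
  qed
  have B: "\<forall>s\<in>{m..b}. \<forall>t\<in>{m..b}. s < t \<longrightarrow> \<gamma> s > \<gamma> t"
  proof (intro ballI impI)
    fix s t assume st: "s \<in> {m..b}" "t \<in> {m..b}" "s < t"
    show "\<gamma> s > \<gamma> t"
    proof (rule decr)
      show "0 \<le> s" "s < t" "t \<le> b" using st m by auto
      show "\<forall>x. s < x \<and> x < t \<longrightarrow> dcurve b \<gamma> x < 0"
      proof (intro allI impI)
        fix x assume x: "s < x \<and> x < t"
        have "0 < m" "m < x" "x < b" using x st m by auto
        from pdec[OF this] show "dcurve b \<gamma> x < 0" using m(2) by linarith
      qed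
    qed
  qed
  show ?thesis using A B m by blast
next
  case False
  have ppos: "dcurve b \<gamma> x > 0" if x: "x \<in> {0<..<b}" for x
  proof (rule ccontr)
    assume "\<not> dcurve b \<gamma> x > 0"
    then have px: "dcurve b \<gamma> x \<le> 0" by simp
    have "eventually (\<lambda>u. 1 \<le> dcurve b \<gamma> u) (at_right 0)"
      using partA unfolding filterlim_at_top by blast
    moreover have "eventually (\<lambda>u. u \<in> {0<..<x}) (at_right 0)"
      using eventually_at_right_real[of 0 x] x by simp
    ultimately have "eventually (\<lambda>u. u \<in> {0<..<x} \<and> 1 \<le> dcurve b \<gamma> u) (at_right 0)"
      by eventually_elim auto
    then obtain u where u: "u \<in> {0<..<x}" "1 \<le> dcurve b \<gamma> u"
      using eventually_happens[of _ "at_right (0::real)"] trivial_limit_at_right_real by blast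
    have pc: "continuous_on {u..x} (dcurve b \<gamma>)" by (rule continuous_on_subset[OF pcont]) (use u x in auto)
    obtain z where z: "u \<le> z" "z \<le> x" "dcurve b \<gamma> z = 0"
    proof -
      have "0 \<le> dcurve b \<gamma> u" "u \<le> x" using u by auto
      from IVT2'[of "dcurve b \<gamma>" x 0 u, OF px this pc] show ?thesis using that by blast
    qed
    have "z \<in> {0<..<b}" using z u x by auto
    then show False using False z(3) by blast
  qed
  have "\<forall>s\<in>{0..b}. \<forall>t\<in>{0..b}. s < t \<longrightarrow> \<gamma> s < \<gamma> t"
  proof (intro ballI impI)
    fix s t assume st: "s \<in> {0..b}" "t \<in> {0..b}" "s < t"
    show "\<gamma> s < \<gamma> t"
    proof (rule incr)
      show "0 \<le> s" "s < t" "t \<le> b" using st by auto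
      show "\<forall>x. s < x \<and> x < t \<longrightarrow> dcurve b \<gamma> x > 0"
      proof (intro allI impI)
        fix x assume x: "s < x \<and> x < t"
        then have "x \<in> {0<..<b}" using st by auto
        then show "dcurve b \<gamma> x > 0" by (rule ppos)
      qed
    qed
  qed
  then show ?thesis by blast
qed

lemma partB: "\<forall>c e. 0 \<le> c \<and> c < e \<and> e \<le> b \<longrightarrow> \<not> (\<forall>t\<in>{c..e}. \<gamma> t = \<gamma> c)"
proof (intro allI impI notI)
  fix c e assume ce: "0 \<le> c \<and> c < e \<and> e \<le> b" and const: "\<forall>t\<in>{c..e}. \<gamma> t = \<gamma> c"
  have ce1: "0 \<le> c" "c < e" "e \<le> b" using ce by auto
  have "e \<in> {c..e}" using ce1 by auto
  then have ge: "\<gamma> e = \<gamma> c" using const by blast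
  from partD show False
  proof
    assume inc: "\<forall>s\<in>{0..b}. \<forall>t\<in>{0..b}. s < t \<longrightarrow> \<gamma> s < \<gamma> t"
    have "c \<in> {0..b}" "e \<in> {0..b}" using ce1 by auto
    then have "\<gamma> c < \<gamma> e" using inc ce1(2) by blast
    then show False using ge by simp
  next
    assume "\<exists>m\<in>{0<..<b}. (\<forall>s\<in>{0..m}. \<forall>t\<in>{0..m}. s < t \<longrightarrow> \<gamma> s < \<gamma> t) \<and>
                  (\<forall>s\<in>{m..b}. \<forall>t\<in>{m..b}. s < t \<longrightarrow> \<gamma> s > \<gamma> t)"
    then obtain m where m1: "m \<in> {0<..<b}" and m2: "\<forall>s\<in>{0..m}. \<forall>t\<in>{0..m}. s < t \<longrightarrow> \<gamma> s < \<gamma> t"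
      and m3: "\<forall>s\<in>{m..b}. \<forall>t\<in>{m..b}. s < t \<longrightarrow> \<gamma> s > \<gamma> t" by blast
    show False
    proof (cases "c < m")
      case True
      have i: "c \<in> {0..m}" "min e m \<in> {0..m}" "c < min e m" using True ce1 m1 by auto
      have "\<gamma> c < \<gamma> (min e m)" using m2 i by blast
      moreover have "min e m \<in> {c..e}" using i by auto
      then have "\<gamma> (min e m) = \<gamma> c" using const by blast
      ultimately show False by linarith
    next
      case False
      have i: "c \<in> {m..b}" "e \<in> {m..b}" using False ce1 by auto
      have "\<gamma> c > \<gamma> e" using m3 i ce1(2) by blast
      then show False using ge by simp
    qed
  qed
qed

lemma partC:
  "finite {t\<in>{0<..b}. dcurve b \<gamma> t = 0} \<and> card {t\<in>{0<..b}. dcurve b \<gamma> t = 0} \<le> 1 \<and>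
     (\<forall>t\<in>{0<..b}. dcurve b \<gamma> t = 0 \<longrightarrow> (\<forall>s\<in>{0..b}. \<gamma> s \<le> \<gamma> t))"
proof (intro conjI)
  let ?Z = "{t\<in>{0<..b}. dcurve b \<gamma> t = 0}"
  have sub: "?Z \<subseteq> {t0}" if "t0 \<in> ?Z" for t0
  proof
    fix t assume t: "t \<in> ?Z"
    show "t \<in> {t0}"
    proof (rule ccontr)
      assume "t \<notin> {t0}"
      then have "t < t0 \<or> t0 < t" by auto
      moreover have "0 < t" "t \<le> b" "dcurve b \<gamma> t = 0" using t by auto
      moreover have "0 < t0" "t0 \<le> b" "dcurve b \<gamma> t0 = 0" using that by auto
      ultimately show False using pinj[of t t0] pinj[of t0 t] by force
    qed
  qed
  show "finite ?Z"
  proof (cases "?Z = {}")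
    case False then obtain t0 where "t0 \<in> ?Z" by blast
    then show ?thesis using sub finite_subset by blast
  next
    case True then show ?thesis by (metis finite.emptyI)
  qed
  show "card ?Z \<le> 1"
  proof (cases "?Z = {}")
    case False then obtain t0 where "t0 \<in> ?Z" by blast
    then show ?thesis using sub card_mono[of "{t0}" ?Z] by fastforce
  next
    case True then show ?thesis by (metis card.empty zero_le_one)
  qed
  show "\<forall>t\<in>{0<..b}. dcurve b \<gamma> t = 0 \<longrightarrow> (\<forall>s\<in>{0..b}. \<gamma> s \<le> \<gamma> t)"
  proof (intro ballI impI)
    fix t s assume t: "t \<in> {0<..b}" and pt: "dcurve b \<gamma> t = 0" and s: "s \<in> {0..b}"
    consider "s < t" | "s = t" | "t < s" by linarith
    then show "\<gamma> s \<le> \<gamma> t"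
    proof cases
      case 1
      have "\<gamma> s < \<gamma> t"
      proof (rule incr)
        show "0 \<le> s" "s < t" "t \<le> b" using 1 s t by auto
        show "\<forall>x. s < x \<and> x < t \<longrightarrow> dcurve b \<gamma> x > 0"
        proof (intro allI impI)
          fix x assume x: "s < x \<and> x < t"
          have "0 < x" "x < t" "t \<le> b" using x s t by auto
          from pinj[OF this] show "dcurve b \<gamma> x > 0" using pt by linarith
        qed
      qed
      then show ?thesis by simp
    next
      case 3
      have "\<gamma> t > \<gamma> s"
      proof (rule decr)
        show "0 \<le> t" "t < s" "s \<le> b" using 3 s t by auto
        show "\<forall>x. t < x \<and> x < s \<longrightarrow> dcurve b \<gamma> x < 0"
        proof (intro allI impI)
          fix x assume x: "t < x \<and> x < s"
          have "0 < t" "t < x" "x \<le> b" using x s t by auto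
          from pinj[OF this] show "dcurve b \<gamma> x < 0" using pt by linarith
        qed
      qed
      then show ?thesis by simp
    qed simp
  qed
qed

end

theorem proposition3:
  fixes b \<beta> :: real and \<gamma> :: "real \<Rightarrow> real"
  assumes "b > 0" and "\<beta> > 0"
    and "admissible b \<beta> \<gamma>"
    and "\<forall>\<eta>. admissible b \<beta> \<eta> \<longrightarrow> Lfun b \<gamma> \<le> Lfun b \<eta>"
  shows "filterlim (dcurve b \<gamma>) at_top (at_right 0) \<and>
    (\<forall>c e. 0 \<le> c \<and> c < e \<and> e \<le> b \<longrightarrow> \<not> (\<forall>t\<in>{c..e}. \<gamma> t = \<gamma> c)) \<and>
    (finite {t\<in>{0<..b}. dcurve b \<gamma> t = 0} \<and> card {t\<in>{0<..b}. dcurve b \<gamma> t = 0} \<le> 1 \<and>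
     (\<forall>t\<in>{0<..b}. dcurve b \<gamma> t = 0 \<longrightarrow> (\<forall>s\<in>{0..b}. \<gamma> s \<le> \<gamma> t))) \<and>
    ((\<forall>s\<in>{0..b}. \<forall>t\<in>{0..b}. s < t \<longrightarrow> \<gamma> s < \<gamma> t) \<or>
     (\<exists>m\<in>{0<..<b}. (\<forall>s\<in>{0..m}. \<forall>t\<in>{0..m}. s < t \<longrightarrow> \<gamma> s < \<gamma> t) \<and>
                    (\<forall>s\<in>{m..b}. \<forall>t\<in>{m..b}. s < t \<longrightarrow> \<gamma> s > \<gamma> t))) \<and>
    (\<forall>s t. 0 < s \<and> s < t \<and> t < b \<longrightarrow> dcurve b \<gamma> t < dcurve b \<gamma> s)"
proof -
  have m: "minim b \<beta> \<gamma>" unfolding minim_def using assms by auto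
  show ?thesis
    apply (rule conjI, rule minim.partA[OF m])
    apply (rule conjI, rule minim.partB[OF m])
    apply (rule conjI, rule minim.partC[OF m])
    apply (rule conjI, rule minim.partD[OF m])
    using minim.pdec[OF m] by blast
qed

end
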